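(* Let $k>4$ be an even integer. Assume that when the procedure $\mathrm{Permutations}$ is run on the list $(0,1,2,\dots,k-1)$ (i.e. $\mathrm{Permutations}(L,0,\mathrm{Func})$ with $L=(0,1,\dots,k-1)$), the last permutation it produces is $(1,4,3,5,6,7,8,\dots,k-1,2,0)$ (and, correspondingly, for any list of $k$ pairwise distinct elements $(x_0,\dots,x_{k-1})$ the last permutation produced is $(x_1,x_4,x_3,x_5,x_6,\dots,x_{k-1},x_2,x_0)$). Then, when $\mathrm{Permutations}$ is run on the list $(0,1,2,\dots,k)$ of $k+1$ elements, each of the $k+1$ elements is inserted exactly once at the beginning of the list (i.e. the $k+1$ recursive calls $\mathrm{Permutations}(L,1,\mathrm{Func})$ made by the top-level invocation are made with pairwise distinct elements at position $0$), and the last permutation produced is $(1,0,2,3,4,\dots,k)$, the initial sequence with its first two elements swapped.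
   Context: Lists are 0-indexed. For a list $L$, $\mathrm{extract}(L,j)$ removes the element at position $j$ from $L$ and returns it; $\mathrm{Insert}(L,i,x)$ inserts $x$ into $L$ so that it occupies position $i$, shifting the elements previously at positions $\ge i$ one step to the right. Each combined operation $\mathrm{Insert}(L,i,\mathrm{extract}(L,j))$ first extracts, then inserts, so the length of $L$ is unchanged. The recursive procedure $\mathrm{Permutations}(L,i,\mathrm{Func})$ (with $\mathrm{Func}$ a callback) is: let $n=\mathrm{length}(L)$. If $i\ge n-1$, call $\mathrm{Func}(L)$. Otherwise: (1) call $\mathrm{Permutations}(L,i+1,\mathrm{Func})$; (2) do $\mathrm{Insert}(L,i,\mathrm{extract}(L,i+1))$ and call $\mathrm{Permutations}(L,i+1,\mathrm{Func})$; (3) repeat $\max(n-i-3,0)$ times: if $n-i$ is even, do $\mathrm{Insert}(L,i,\mathrm{extract}(L,n-1))$, otherwise do $\mathrm{Insert}(L,i,\mathrm{extract}(L,i+1))$; then call $\mathrm{Permutations}(L,i+1,\mathrm{Func})$; (4) if $n-i>2$: do $\mathrm{Insert}(L,i,\mathrm{extract}(L,i+1))$ and call $\mathrm{Permutations}(L,i+1,\mathrm{Func})$. The main call is $\mathrm{Permutations}(L,0,\mathrm{Func})$; each list passed to $\mathrm{Func}$ is a "produced permutation". A call $\mathrm{Permutations}(L,i,\mathrm{Func})$ modifies only positions $\ge i$, and its effect on that suffix depends only on the suffix length $n-i$ (so the assumed behaviour on $(0,\dots,k-1)$ determines a fixed rearrangement applied to any suffix of length $k$). The "last permutation produced" when run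 on a list is the state of the list when the main call returns (which equals the argument of the last call to $\mathrm{Func}$). *)

theory Defs
  imports Main
begin

text \<open>Insert(L, i, extract(L, j)): remove the element at position j, then insert it
  so that it occupies position i.\<close>
definition move_elem :: "nat \<Rightarrow> nat \<Rightarrow> 'a list \<Rightarrow> 'a list" where
  "move_elem i j L = (let x = L ! j; L' = take j L @ drop (Suc j) L
                      in take i L' @ [x] @ drop i L')"

text \<open>perms n i L: the state of the list after Permutations(L, i, Func) returns,
  where n is the (invariant) length of the list.  The callback does not modify L.\<close>
function perms :: "nat \<Rightarrow> nat \<Rightarrow> 'a list \<Rightarrow> 'a list" where
  "perms n i L =
    (if n - 1 \<le> i then L else
     (let L2 = perms n (Suc i) (move_elem i (Suc i) (perms n (Suc i) L));
          L3 = fold (\<lambda>_ M. perms n (Suc i)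
                        (if even (n - i) then move_elem i (n - 1) M else move_elem i (Suc i) M))
                    [0..<(n - i - 3)] L2
      in if n - i > 2 then perms n (Suc i) (move_elem i (Suc i) L3) else L3))"
  by pat_completeness auto
termination by (relation "measure (\<lambda>(n, i, L). n - i)") auto

text \<open>The list of arguments with which Permutations(L, i, Func) calls
  Permutations(\<cdot>, i+1, Func) (in order), for n - 1 > i.\<close>
definition perms_calls :: "nat \<Rightarrow> nat \<Rightarrow> 'a list \<Rightarrow> 'a list list" where
  "perms_calls n i L =
    (let P = perms n (Suc i);
         s = (\<lambda>M. if even (n - i) then move_elem i (n - 1) M else move_elem i (Suc i) M);
         c2 = move_elem i (Suc i) (P L);
         loop = map (\<lambda>j. ((s \<circ> P) ^^ j) c2) [0..<Suc (n - i - 3)]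
     in L # loop @ (if n - i > 2 then [move_elem i (Suc i) (P (last loop))] else []))"

definition last_perm :: "'a list \<Rightarrow> 'a list" where
  "last_perm L = perms (length L) 0 L"

end

theory Submission
  imports Defs
begin


declare perms.simps[simp del]

lemma move_cons: "move_elem (Suc i) (Suc j) (x # L) = x # move_elem i j L"
  by (simp add: move_elem_def Let_def)

lemma move_map: "j < length L \<Longrightarrow> move_elem i j (map f L) = map f (move_elem i j L)"
  by (simp add: move_elem_def Let_def take_map drop_map)

lemma move_len: "j < length L \<Longrightarrow> length (move_elem i j L) = length L"
  by (simp add: move_elem_def Let_def)

lemma fold_cons_gen:
  assumes "\<And>M. F (x # M) = x # G M"
  shows "fold (\<lambda>_. F) xs (x # M) = x # fold (\<lambda>_. G) xs M"
  using assms by (induction xs arbitrary: M) auto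


lemma perms_base: "n - 1 \<le> i \<Longrightarrow> perms n i L = L"
  by (subst perms.simps) simp

lemma perms_step: "\<not> n - 1 \<le> i \<Longrightarrow> perms n i L =
   (let L2 = perms n (Suc i) (move_elem i (Suc i) (perms n (Suc i) L));
          L3 = fold (\<lambda>_ M. perms n (Suc i)
                        (if even (n - i) then move_elem i (n - 1) M else move_elem i (Suc i) M))
                    [0..<(n - i - 3)] L2
      in if n - i > 2 then perms n (Suc i) (move_elem i (Suc i) L3) else L3)"
  by (subst perms.simps) simp

lemma perms_cons: "perms (Suc m) (Suc i) (x # L) = x # perms m i L"
proof (induction "m - i" arbitrary: i L rule: less_induct)
  case less
  show ?case
  proof (cases "m - 1 \<le> i")
    case True
    then show ?thesis by (simp add: perms_base)
  next
    case False
    then have m1: "m = Suc (m - 1)" by auto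
    have IH: "\<And>L. perms (Suc m) (Suc (Suc i)) (x # L) = x # perms m (Suc i) L"
      using less False by auto
    have s: "\<And>M. (if even (Suc m - Suc i) then move_elem (Suc i) (Suc m - 1) (x # M) else move_elem (Suc i) (Suc (Suc i)) (x#M))
         = x # (if even (m - i) then move_elem i (m - 1) M else move_elem i (Suc i) M)"
    proof -
      have e: "Suc m - 1 = Suc (m - 1)" using m1 by simp
      show "\<And>M. ?thesis M" by (simp only: e diff_Suc_Suc move_cons if_distrib[where f="Cons x"])
    qed
    have F: "\<And>M. perms (Suc m) (Suc (Suc i)) (if even (Suc m - Suc i) then move_elem (Suc i) (Suc m - 1) (x # M) else move_elem (Suc i) (Suc (Suc i)) (x#M))
       = x # perms m (Suc i) (if even (m - i) then move_elem i (m - 1) M else move_elem i (Suc i) M)"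
      by (simp only: s IH)
    have c1: "\<not> Suc m - 1 \<le> Suc i" using False by simp
    show ?thesis
      apply (subst perms_step[OF c1])
      apply (subst perms_step[OF False])
      apply (simp only: Let_def IH move_cons)
      apply (simp only: fold_cons_gen[where F="\<lambda>M. perms (Suc m) (Suc (Suc i)) (if even (Suc m - Suc i) then move_elem (Suc i) (Suc m - 1) M else move_elem (Suc i) (Suc (Suc i)) M)" and G="\<lambda>M. perms m (Suc i) (if even (m - i) then move_elem i (m - 1) M else move_elem i (Suc i) M)", OF F])
      apply (simp only: diff_Suc_Suc)
      apply (simp only: if_distrib[where f="Cons x"] IH move_cons)
      done
  qed
qed

lemma fold_inv:
  assumes "\<And>M. P M \<Longrightarrow> P (F M)" "P M"
  shows "P (fold (\<lambda>_. F) xs M)"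
  using assms by (induction xs arbitrary: M) auto

lemma fold_map_gen:
  assumes "\<And>M. length M = n \<Longrightarrow> F (map f M) = map f (G M)"
    and "\<And>M. length M = n \<Longrightarrow> length (G M) = n" "length M = n"
  shows "fold (\<lambda>_. F) xs (map f M) = map f (fold (\<lambda>_. G) xs M)"
  using assms by (induction xs arbitrary: M) auto

lemma perms_len: "length (L :: 'a list) = n \<Longrightarrow> length (perms n i L) = n"
proof (induction "n - i" arbitrary: i L rule: less_induct)
  case less
  show ?case
  proof (cases "n - 1 \<le> i")
    case True
    then show ?thesis using less by (simp add: perms_base)
  next
    case False
    have n0: "0 < n" "Suc i < n" "n - 1 < n" using False by auto
    have IH: "length (perms n (Suc i) L) = n" if "length L = n" for L :: "'a list"
      using less(1)[of "Suc i" L] False that by simp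
    have m: "\<And>L j. length L = n \<Longrightarrow> j < n \<Longrightarrow> length (move_elem i j L) = n"
      by (simp add: move_len)
    have S: "length (perms n (Suc i) (if even (n - i) then move_elem i (n - 1) M else move_elem i (Suc i) M)) = n"
      if "length M = n" for M :: "'a list"
    proof -
      have a: "length (perms n (Suc i) (move_elem i (n-1) M)) = n" by (rule IH, rule m[OF that n0(3)])
      have b: "length (perms n (Suc i) (move_elem i (Suc i) M)) = n" by (rule IH, rule m[OF that n0(2)])
      show ?thesis using a b by simp
    qed
    have L2: "length (perms n (Suc i) (move_elem i (Suc i) (perms n (Suc i) L))) = n"
      using False less.prems by (simp add: IH move_len n0)
    have L3: "length (fold (\<lambda>_ M. perms n (Suc i) (if even (n - i) then move_elem i (n - 1) M else move_elem i (Suc i) M)) [0..<n - i - 3] (perms n (Suc i) (move_elem i (Suc i) (perms n (Suc i) L)))) = n"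
      by (rule fold_inv[where P="\<lambda>M. length M = n", OF S L2])
    show ?thesis
      apply (subst perms_step[OF False])
      using L3 False less.prems by (simp add: Let_def IH move_len n0)
  qed
qed

lemma perms_map: "length (L :: 'a list) = n \<Longrightarrow> perms n i (map (f :: 'a \<Rightarrow> 'b) L) = map f (perms n i L)"
proof (induction "n - i" arbitrary: i L rule: less_induct)
  case less
  show ?case
  proof (cases "n - 1 \<le> i")
    case True
    then show ?thesis using less by (simp add: perms_base)
  next
    case False
    have n0: "0 < n" "Suc i < n" "n - 1 < n" using False by auto
    have IH: "perms n (Suc i) (map f L) = map f (perms n (Suc i) L)" if "length L = n" for L :: "'a list"
      using less(1)[of "Suc i" L] False that by simp
    have IHl: "\<And>L. length L = n \<Longrightarrow> length (perms n (Suc i) L) = n"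
      by (rule perms_len)
    have m: "\<And>L j. length L = n \<Longrightarrow> j < n \<Longrightarrow> length (move_elem i j L) = n"
      by (simp add: move_len)
    have mm: "\<And>L j. length L = n \<Longrightarrow> j < n \<Longrightarrow> move_elem i j (map f L) = map f (move_elem i j L)"
      by (simp add: move_map)
    define G :: "'a list \<Rightarrow> 'a list" where "G = (\<lambda>M. perms n (Suc i) (if even (n - i) then move_elem i (n - 1) M else move_elem i (Suc i) M))"
    define G' :: "'b list \<Rightarrow> 'b list" where "G' = (\<lambda>M. perms n (Suc i) (if even (n - i) then move_elem i (n - 1) M else move_elem i (Suc i) M))"
    have S: "\<And>M. length M = n \<Longrightarrow> length (G M) = n"
      using False unfolding G_def by (cases "even (n - i)") (simp_all add: IHl m)
    have F: "\<And>M. length M = n \<Longrightarrow> G' (map f M) = map f (G M)"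
      using False unfolding G_def G'_def by (cases "even (n - i)") (simp_all add: move_map IH IHl move_len n0)
    have L2: "length (perms n (Suc i) (move_elem i (Suc i) (perms n (Suc i) L))) = n"
      using False less.prems by (simp add: IHl move_len n0)
    have L3: "length (fold (\<lambda>_. G) [0..<n - i - 3] (perms n (Suc i) (move_elem i (Suc i) (perms n (Suc i) L)))) = n"
      by (rule fold_inv[where P="\<lambda>M. length M = n", OF S L2])
    have E: "perms n (Suc i) (move_elem i (Suc i) (perms n (Suc i) (map f L)))
        = map f (perms n (Suc i) (move_elem i (Suc i) (perms n (Suc i) L)))"
      using False less.prems by (simp add: IH IHl mm m)
    show ?thesis
      apply (subst (1 2) perms_step[OF False])
      apply (simp only: Let_def G_def[symmetric] G'_def[symmetric] E fold_map_gen[where G=G and F=G' and n=n, OF F S L2])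
      using L3 False by (simp add: IH mm IHl m)
  qed
qed


definition pp :: "nat \<Rightarrow> nat \<Rightarrow> nat" where
  "pp k i = (if i=0 then 2 else if i=1 then 0 else if i=2 then 5 else if i=3 then 4
     else if i = k-1 then 3 else if i=k then 1 else i+2)"

definition orb :: "nat \<Rightarrow> nat \<Rightarrow> nat" where
  "orb k j = (if j=0 then 0 else if j=1 then 2 else if j < k div 2 then 2*j+1
     else if j = k div 2 then 3 else if j < k then 2*(j - k div 2)+2 else 1)"

lemma pp_orb: assumes "even k" "k > 4" "j < k" shows "pp k (orb k j) = orb k (Suc j)"
proof -
  obtain h where k: "k = 2*h" using assms by auto
  have h: "h \<ge> 3" using assms k by auto
  show ?thesis using assms h unfolding k pp_def orb_def by (auto; presburger)
qed

lemma pp_orb_k: assumes "even k" "k > 4" shows "pp k (orb k k) = 0"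
proof -
  obtain h where k: "k = 2*h" using assms by auto
  have h: "h \<ge> 3" using assms k by auto
  show ?thesis using h unfolding k pp_def orb_def by auto
qed

lemma pp_pow: assumes "even k" "k > 4" "j \<le> k" shows "(pp k ^^ j) 0 = orb k j"
  using assms(3)
proof (induction j)
  case 0 then show ?case by (simp add: orb_def)
next
  case (Suc j) then show ?case using pp_orb[OF assms(1,2)] by simp
qed

lemma orb_inj: assumes "even k" "k > 4" shows "inj_on (orb k) {..k}"
proof -
  obtain h where k: "k = 2*h" using assms by auto
  have h: "h \<ge> 3" using assms k by auto
  show ?thesis unfolding inj_on_def k orb_def using h by (auto; presburger)
qed

lemma orb_le: assumes "even k" "k > 4" "j \<le> k" shows "orb k j \<le> k"
proof -
  obtain h where k: "k = 2*h" using assms by auto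
  have h: "h \<ge> 3" using assms k by auto
  show ?thesis using assms h unfolding k orb_def by auto
qed

lemma orb_surj: assumes "even k" "k > 4" shows "orb k ` {..k} = {..k}"
  by (rule endo_inj_surj) (use orb_le[OF assms] orb_inj[OF assms] in auto)

lemma pp_period: assumes "even k" "k > 4" "i \<le> k" shows "(pp k ^^ Suc k) i = i"
proof -
  obtain j where j: "j \<le> k" "i = orb k j" using orb_surj[OF assms(1,2)] assms(3) by force
  have z: "(pp k ^^ Suc k) 0 = 0" using pp_pow[OF assms(1,2) order_refl] pp_orb_k[OF assms(1,2)] by simp
  have "(pp k ^^ Suc k) i = (pp k ^^ Suc k) ((pp k ^^ j) 0)" using j pp_pow[OF assms(1,2)] by simp
  also have "\<dots> = (pp k ^^ (Suc k + j)) 0" by (simp add: funpow_add)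
  also have "\<dots> = (pp k ^^ j) ((pp k ^^ Suc k) 0)" by (simp only: add.commute[of "Suc k"] funpow_add comp_def)
  also have "\<dots> = i" using z j pp_pow[OF assms(1,2)] by simp
  finally show ?thesis .
qed

lemma pp_le: assumes "even k" "k > 4" "i \<le> k" shows "pp k i \<le> k"
  using assms by (auto simp: pp_def)

lemma sigma_eq: assumes "even k" "k > 4"
  shows "[2,0,5,4] @ [6..<k+1] @ [3,1] = map (pp k) [0..<k+1]"
proof -
  have "[4..<(k-1)+2] = [4..<k-1] @ [k-1..<(k-1)+2]" by (rule upt_add_eq_append) (use assms in simp)
  moreover have e2: "[k-1..<(k-1)+2] = [k-1,k]"
  proof -
    obtain m where "k = Suc m" using assms by (cases k) auto
    then show ?thesis by (simp add: numeral_2_eq_2)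
  qed
  moreover have e1: "(k-1)+2 = k+1" using assms by simp
  ultimately have u1: "[4..<k+1] = [4..<k-1] @ [k-1,k]" by metis
  have "[0..<4+(k-3)] = [0..<4] @ [4..<4+(k-3)]" by (rule upt_add_eq_append) simp
  moreover have "4+(k-3) = k+1" using assms by simp
  moreover have "[0..<4] = [0,1,2,3::nat]" by (simp add: eval_nat_numeral)
  ultimately have u: "[0..<k+1] = [0,1,2,3] @ [4..<k-1] @ [k-1,k]"
    using u1 by simp
  have m0: "map (pp k) [4..<k-1] = map (\<lambda>i. Suc (Suc i)) [4..<k-1]"
    by (rule map_cong[OF refl]) (auto simp: pp_def)
  have m: "map (pp k) [4..<k-1] = map Suc (map Suc [4..<k-1])"
    unfolding m0 by simp
  have m2: "map Suc (map Suc [4..<k-1]) = [6..<k+1]"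
    using assms by (simp add: map_Suc_upt)
  have p: "map (pp k) [0,1,2,3] = [2,0,5,4]" "map (pp k) [k-1,k] = [3,1]" using assms by (auto simp: pp_def)
  show ?thesis by (simp only: u map_append m m2 p)
qed


lemma move01: "move_elem 0 1 (a # b # r) = b # a # r" "move_elem 0 (Suc 0) (a # b # r) = b # a # r"
  by (simp_all add: move_elem_def)

lemma move01_twice: "length L \<ge> 2 \<Longrightarrow> move_elem 0 1 (move_elem 0 1 L) = L"
  by (cases L rule: remdups_adj.cases) (auto simp: move01)

lemma hyp_gen:
  assumes "last_perm [0..<k] = Q" "length xs = k"
  shows "perms k 0 xs = map (nth xs) Q"
proof -
  have "xs = map (nth xs) [0..<k]" using assms(2) map_nth[of xs] by simp
  then have "perms k 0 xs = perms k 0 (map (nth xs) [0..<k])" by simp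
  also have "\<dots> = map (nth xs) (perms k 0 [0..<k])" by (rule perms_map) simp
  finally show ?thesis using assms(1) by (simp add: last_perm_def)
qed

lemma P_form:
  assumes "last_perm [0..<k] = Q" "length xs = Suc k"
  shows "perms (Suc k) 1 xs = map (nth xs) (0 # map Suc Q)"
proof -
  obtain a t where xs: "xs = a # t" using assms(2) by (cases xs) auto
  have "perms (Suc k) 1 xs = a # perms k 0 t" unfolding xs One_nat_def by (rule perms_cons)
  also have "\<dots> = a # map (nth t) Q" using hyp_gen[OF assms(1)] assms(2) xs by simp
  finally show ?thesis using xs by simp
qed

lemma T_form:
  assumes "even k" "k > 4" "last_perm [0..<k] = [1, 4, 3] @ [5..<k] @ [2, 0]" "length xs = Suc k"
  shows "move_elem 0 1 (perms (Suc k) 1 xs) = map (\<lambda>i. xs ! pp k i) [0..<k+1]"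
proof -
  have ms: "map Suc [5..<k] = [6..<k+1]" using map_Suc_upt[of 5 k] by simp
  have q: "0 # map Suc ([1, 4, 3] @ [5..<k] @ [2, 0]) = 0 # 2 # ([5,4] @ map Suc [5..<k] @ [3,1])"
    by simp
  have "move_elem 0 1 (perms (Suc k) 1 xs) = move_elem 0 1 (map (nth xs) (0 # map Suc ([1, 4, 3] @ [5..<k] @ [2, 0])))"
    using P_form[OF assms(3,4)] by simp
  also have "\<dots> = map (nth xs) (move_elem 0 1 (0 # map Suc ([1, 4, 3] @ [5..<k] @ [2, 0])))"
    by (rule move_map) simp
  also have "\<dots> = map (nth xs) ([2,0,5,4] @ [6..<k+1] @ [3,1])" by (simp only: q move01 ms) simp
  also have "\<dots> = map (nth xs) (map (pp k) [0..<k+1])" by (simp only: sigma_eq[OF assms(1,2)])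
  finally show ?thesis by (simp only: map_map comp_def)
qed

lemma Tpow:
  assumes "even k" "k > 4" "last_perm [0..<k] = [1, 4, 3] @ [5..<k] @ [2, 0]"
  shows "((\<lambda>xs. move_elem 0 1 (perms (Suc k) 1 xs)) ^^ j) [0..<k+1] = map (pp k ^^ j) [0..<k+1]"
proof (induction j)
  case 0 then show ?case by simp
next
  case (Suc j)
  have "((\<lambda>xs. move_elem 0 1 (perms (Suc k) 1 xs)) ^^ Suc j) [0..<k+1]
      = move_elem 0 1 (perms (Suc k) 1 (map (pp k ^^ j) [0..<k+1]))" using Suc by simp
  also have "\<dots> = map (\<lambda>i. map (pp k ^^ j) [0..<k+1] ! pp k i) [0..<k+1]"
    by (rule T_form[OF assms]) simp
  also have "\<dots> = map (pp k ^^ Suc j) [0..<k+1]"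
  proof -
    have l: "pp k i < Suc k" if "i < Suc k" for i using pp_le[OF assms(1,2), of i] that by simp
    show ?thesis by (rule map_cong[OF refl]) (simp add: l funpow_Suc_right del: funpow.simps upt_Suc)
  qed
  finally show ?case .
qed



lemma fold_PT:
  "fold (\<lambda>_ M. P (s M)) [0..<m] (P x) = P (((\<lambda>y. s (P y)) ^^ m) x)"
  by (induction m) auto

theorem lemma2:
  fixes k :: nat
  assumes "even k" and "k > 4"
    and "last_perm [0..<k] = [1, 4, 3] @ [5..<k] @ [2, 0]"
  shows "length (perms_calls (k + 1) 0 [0..<k + 1]) = k + 1
       \<and> distinct (map hd (perms_calls (k + 1) 0 [0..<k + 1]))
       \<and> last_perm [0..<k + 1] = [1, 0] @ [2..<k + 1]"
proof -
  define T :: "nat list \<Rightarrow> nat list" where "T = (\<lambda>xs. move_elem 0 1 (perms (Suc k) 1 xs))"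
  define L0 where "L0 = [0..<k+1]"
  have Tp: "(T ^^ j) L0 = map (pp k ^^ j) L0" for j
    unfolding T_def L0_def by (rule Tpow[OF assms])
  have ev: "\<not> even (Suc k)" using assms by simp
  have s_eq: "(\<lambda>M. if even (Suc k - 0) then move_elem 0 (Suc k - 1) M else move_elem 0 (Suc 0) M) = move_elem 0 1"
    using ev by simp
  have TK: "T ((T ^^ (k-2)) (T L0)) = (T ^^ k) L0"
  proof -
    have kk: "Suc (Suc (k-2)) = k" using assms by simp
    have "(T ^^ Suc (Suc (k-2))) L0 = T ((T ^^ (k-2)) (T L0))"
      apply (subst funpow.simps(2))
      apply (subst funpow_Suc_right)
      apply (simp only: comp_def)
      done
    then show ?thesis unfolding kk by simp
  qed
  have pc: "perms_calls (Suc k) 0 L0 = L0 # map (\<lambda>j. (T ^^ j) (T L0)) [0..<k-1] @ [T ((T ^^ (k-2)) (T L0))]"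
  proof -
    have c: "Suc (Suc k - 0 - 3) = k - 1" using assms by simp
    have g: "2 < Suc k - 0" using assms by simp
    have sP: "(move_elem 0 1 \<circ> perms (Suc k) (Suc 0)) = T" unfolding T_def by (simp add: comp_def)
    have l: "last (map (\<lambda>j. (T ^^ j) (T L0)) [0..<k-1]) = (T ^^ (k-2)) (T L0)"
      using assms by (simp add: last_map numeral_2_eq_2)
    show ?thesis
      unfolding perms_calls_def Let_def s_eq c sP if_P[OF g]
      using l by (simp add: T_def)
  qed
  have calls: "perms_calls (Suc k) 0 L0 = map (\<lambda>j. map (pp k ^^ j) L0) [0..<Suc k]"
  proof -
    have a: "(T ^^ j) (T L0) = map (pp k ^^ Suc j) L0" for j
      using Tp[of "Suc j"] by (simp only: funpow_Suc_right comp_def)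
    have u: "[0..<Suc k] = [0] @ map Suc [0..<k-1] @ [k]"
    proof -
      have kk: "Suc (k-1) = k" using assms by simp
      have m: "map Suc [0..<k-1] = [1..<k]" using map_Suc_upt[of 0 "k-1"] unfolding kk by simp
      have e1: "[0..<Suc k] = [0..<k] @ [k]" by simp
      have e2: "[0..<k] = 0 # [1..<k]" using upt_conv_Cons[of 0 k] assms by simp
      show ?thesis by (simp only: m e1 e2 append_Cons append_Nil)
    qed
    have b: "T ((T ^^ (k-2)) (T L0)) = map (pp k ^^ k) L0"
      unfolding TK by (rule Tp)
    show ?thesis unfolding pc u using a b by simp
  qed
  have part1: "length (perms_calls (k + 1) 0 [0..<k + 1]) = k + 1"
    using calls unfolding L0_def by simp
  have part2: "distinct (map hd (perms_calls (k + 1) 0 [0..<k + 1]))"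
  proof -
    have "map hd (perms_calls (Suc k) 0 L0) = map (\<lambda>j. (pp k ^^ j) 0) [0..<Suc k]"
      unfolding calls by (simp add: L0_def hd_map upt_conv_Cons del: upt_Suc)
    also have "\<dots> = map (orb k) [0..<Suc k]"
      by (rule map_cong[OF refl]) (rule pp_pow[OF assms(1,2)], auto)
    finally have "map hd (perms_calls (Suc k) 0 L0) = map (orb k) [0..<Suc k]" .
    moreover have "distinct (map (orb k) [0..<Suc k])"
    proof -
      have st: "set [0..<Suc k] = {..k}" by auto
      show ?thesis using orb_inj[OF assms(1,2)] by (simp only: distinct_map st distinct_upt simp_thms)
    qed
    ultimately show ?thesis unfolding L0_def by simp
  qed
  have part3: "last_perm [0..<k + 1] = [1, 0] @ [2..<k + 1]"
  proof -
    let ?P = "perms (Suc k) (Suc 0)"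
    have nb: "\<not> Suc k - 1 \<le> 0" using assms by simp
    have c: "Suc k - 0 - 3 = k - 2" by simp
    have g: "2 < Suc k - 0" using assms by simp
    have T': "T = (\<lambda>y. move_elem 0 1 (?P y))" unfolding T_def by simp
    have lenP: "length (?P y) = Suc k" if "length y = Suc k" for y :: "nat list"
      using perms_len that by blast
    have lenT: "length ((T ^^ j) L0) = Suc k" for j using Tp by (simp add: L0_def)
    have "last_perm L0 = ?P (move_elem 0 1 (fold (\<lambda>_ M. ?P (move_elem 0 1 M)) [0..<k-2] (?P (T L0))))"
      unfolding last_perm_def L0_def
      apply (subst perms_step)
      using nb apply simp
      using g ev by (simp add: Let_def T_def)
    also have "\<dots> = ?P (T ((T ^^ (k-2)) (T L0)))"
      by (simp only: fold_PT T'[symmetric]) (simp add: T_def)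
    also have "\<dots> = ?P ((T ^^ k) L0)"
      by (simp only: TK)
    also have "\<dots> = move_elem 0 1 (T ((T ^^ k) L0))"
    proof -
      have "length (?P ((T^^k) L0)) = Suc k" by (rule lenP[OF lenT])
      then have "?P ((T^^k) L0) = move_elem 0 1 (move_elem 0 1 (?P ((T^^k) L0)))"
        using assms by (intro move01_twice[symmetric]) simp
      then show ?thesis by (simp only: T')
    qed
    also have "\<dots> = move_elem 0 1 (map (pp k ^^ Suc k) L0)"
      using Tp[of "Suc k"] by simp
    also have "\<dots> = move_elem 0 1 L0"
    proof -
      have "map (pp k ^^ Suc k) L0 = map id L0"
        unfolding L0_def by (rule map_cong[OF refl]) (simp only: id_apply, rule pp_period[OF assms(1,2)], auto)
      then show ?thesis by simp
    qed
    also have "\<dots> = [1, 0] @ [2..<k + 1]"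
    proof -
      have e: "[0..<k+1] = 0 # 1 # [2..<k+1]"
        using assms(2) by (subst upt_conv_Cons, simp, subst upt_conv_Cons, simp_all add: numeral_2_eq_2)
      show ?thesis unfolding L0_def e by (simp only: move01 append.simps)
    qed
    finally show ?thesis unfolding L0_def .
  qed
  show ?thesis using part1 part2 part3 by blast
qed


end
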